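(* Let $F=(\langle a_\alpha,b_\alpha,F_\alpha\rangle)_{\alpha\in A}$ be an ordinal sum of t-norms, $f:[0,1]\to[0,1]$ strictly increasing with $B_A^f\neq\emptyset$, and $\{f_\beta\}_{\beta\in B_A^f}$ the decomposition set of $f$. Let $T(x,y)=f^{(-1)}(F(f(x),f(y)))$ for $x,y\in[0,1]$ and, for $\beta\in B_A^f$, $T^\beta(x,y)=f_\beta^{(-1)}(F^\beta(f_\beta(x),f_\beta(y)))$ for $x,y\in[s_\beta,t_\beta]$. Then for every $\beta\in B_A^f$, $T(x,y)=T^\beta(x,y)$ for all $x,y\in[s_\beta,t_\beta]$ with $(x,y)\neq(s_\beta,s_\beta)$.
   Context: A t-norm is a commutative, associative map $[0,1]^2\to[0,1]$, non-decreasing in each variable, with neutral element $1$. For a non-decreasing $g:[p,q]\to[u,v]$, the pseudo-inverse is $g^{(-1)}(y)=\sup\{x\in[p,q]:g(x)<y\}$ ($y\in[u,v]$), with $\sup\emptyset=p$. Ordinal sum: $A\neq\emptyset$ is totally ordered, $\{(a_\alpha,b_\alpha)\}_{\alpha\in A}$ are pairwise disjoint non-empty open subintervals of $[0,1]$, $F_\alpha$ are t-norms, and $F(x,y)=a_\alpha+(b_\alpha-a_\alpha)F_\alpha\big(\frac{x-a_\alpha}{b_\alpha-a_\alpha},\frac{y-a_\alpha}{b_\alpha-a_\alpha}\big)$ if $(x,y)\in[a_\alpha,b_\alpha]^2$, and $F(x,y)=\min\{x,y\}$ otherwise. For $\alpha\in A$, $F^\alpha:[a_\alpha,b_\alpha]^2\to[a_\alpha,b_\alpha]$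 is $F^\alpha(x,y)=a_\alpha+(b_\alpha-a_\alpha)F_\alpha\big(\frac{x-a_\alpha}{b_\alpha-a_\alpha},\frac{y-a_\alpha}{b_\alpha-a_\alpha}\big)$. For $\alpha\in A$: $s_\alpha=\inf\{x\in[0,1]:f(x)\ge a_\alpha\}$, $t_\alpha=\sup\{x\in[0,1]:f(x)\le b_\alpha\}$ (with $\inf\emptyset=1$, $\sup\emptyset=0$); $B_A^f=\{\beta\in A: s_\beta<t_\beta\}$. The decomposition set consists of the strictly increasing maps $f_\beta:[s_\beta,t_\beta]\to[a_\beta,b_\beta]$ ($\beta\in B_A^f$) given by $f_\beta(x)=f(x)$ for $x\in(s_\beta,t_\beta)$; $f_\beta(s_\beta)=f(s_\beta)$ if $f(s_\beta)\ge a_\beta$ and $f_\beta(s_\beta)=a_\beta$ if $f(s_\beta)<a_\beta$; $f_\beta(t_\beta)=f(t_\beta)$ if $f(t_\beta)\le b_\beta$ and $f_\beta(t_\beta)=b_\beta$ if $f(t_\beta)>b_\beta$. *)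

theory Defs
  imports Main "HOL.Real"
begin

definition is_tnorm :: "(real \<Rightarrow> real \<Rightarrow> real) \<Rightarrow> bool" where
  "is_tnorm T \<longleftrightarrow>
     (\<forall>x\<in>{0..1}. \<forall>y\<in>{0..1}. T x y \<in> {0..1}) \<and>
     (\<forall>x\<in>{0..1}. \<forall>y\<in>{0..1}. T x y = T y x) \<and>
     (\<forall>x\<in>{0..1}. \<forall>y\<in>{0..1}. \<forall>z\<in>{0..1}. T (T x y) z = T x (T y z)) \<and>
     (\<forall>x\<in>{0..1}. \<forall>x'\<in>{0..1}. \<forall>y\<in>{0..1}. x \<le> x' \<longrightarrow> T x y \<le> T x' y \<and> T y x \<le> T y x') \<and>
     (\<forall>x\<in>{0..1}. T x 1 = x)"

definition pinv :: "(real \<Rightarrow> real) \<Rightarrow> real \<Rightarrow> real \<Rightarrow> real \<Rightarrow> real" where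
  "pinv g p q y = (if {x\<in>{p..q}. g x < y} = {} then p else Sup {x\<in>{p..q}. g x < y})"

definition ordsum_data :: "'i::linorder set \<Rightarrow> ('i \<Rightarrow> real) \<Rightarrow> ('i \<Rightarrow> real) \<Rightarrow>
    ('i \<Rightarrow> real \<Rightarrow> real \<Rightarrow> real) \<Rightarrow> bool" where
  "ordsum_data A a b Fs \<longleftrightarrow> A \<noteq> {} \<and>
     (\<forall>\<alpha>\<in>A. 0 \<le> a \<alpha> \<and> a \<alpha> < b \<alpha> \<and> b \<alpha> \<le> 1 \<and> is_tnorm (Fs \<alpha>)) \<and>
     (\<forall>\<alpha>\<in>A. \<forall>\<gamma>\<in>A. \<alpha> \<noteq> \<gamma> \<longrightarrow> {a \<alpha><..<b \<alpha>} \<inter> {a \<gamma><..<b \<gamma>} = {})"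

definition summand :: "('i \<Rightarrow> real) \<Rightarrow> ('i \<Rightarrow> real) \<Rightarrow> ('i \<Rightarrow> real \<Rightarrow> real \<Rightarrow> real)
    \<Rightarrow> 'i \<Rightarrow> real \<Rightarrow> real \<Rightarrow> real" where
  "summand a b Fs \<alpha> x y = a \<alpha> + (b \<alpha> - a \<alpha>) *
      Fs \<alpha> ((x - a \<alpha>) / (b \<alpha> - a \<alpha>)) ((y - a \<alpha>) / (b \<alpha> - a \<alpha>))"

text \<open>The ordinal sum. (Where closed squares overlap, i.e. at a common endpoint on the
  diagonal, all candidate summands give the same value, so the choice is immaterial.)\<close>
definition ordsum :: "'i set \<Rightarrow> ('i \<Rightarrow> real) \<Rightarrow> ('i \<Rightarrow> real) \<Rightarrow> ('i \<Rightarrow> real \<Rightarrow> real \<Rightarrow> real)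
    \<Rightarrow> real \<Rightarrow> real \<Rightarrow> real" where
  "ordsum A a b Fs x y =
     (if \<exists>\<alpha>\<in>A. x \<in> {a \<alpha>..b \<alpha>} \<and> y \<in> {a \<alpha>..b \<alpha>}
      then summand a b Fs (SOME \<alpha>. \<alpha> \<in> A \<and> x \<in> {a \<alpha>..b \<alpha>} \<and> y \<in> {a \<alpha>..b \<alpha>}) x y
      else min x y)"

definition s_pt :: "(real \<Rightarrow> real) \<Rightarrow> ('i \<Rightarrow> real) \<Rightarrow> 'i \<Rightarrow> real" where
  "s_pt f a \<alpha> = (if {x\<in>{0..1}. f x \<ge> a \<alpha>} = {} then 1 else Inf {x\<in>{0..1}. f x \<ge> a \<alpha>})"

definition t_pt :: "(real \<Rightarrow> real) \<Rightarrow> ('i \<Rightarrow> real) \<Rightarrow> 'i \<Rightarrow> real" where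
  "t_pt f b \<alpha> = (if {x\<in>{0..1}. f x \<le> b \<alpha>} = {} then 0 else Sup {x\<in>{0..1}. f x \<le> b \<alpha>})"

definition B_set :: "'i set \<Rightarrow> ('i \<Rightarrow> real) \<Rightarrow> ('i \<Rightarrow> real) \<Rightarrow> (real \<Rightarrow> real) \<Rightarrow> 'i set" where
  "B_set A a b f = {\<beta>\<in>A. s_pt f a \<beta> < t_pt f b \<beta>}"

definition fdec :: "(real \<Rightarrow> real) \<Rightarrow> ('i \<Rightarrow> real) \<Rightarrow> ('i \<Rightarrow> real) \<Rightarrow> 'i \<Rightarrow> real \<Rightarrow> real" where
  "fdec f a b \<beta> x =
     (if x = s_pt f a \<beta> then (if f x \<ge> a \<beta> then f x else a \<beta>)
      else if x = t_pt f b \<beta> then (if f x \<le> b \<beta> then f x else b \<beta>)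
      else f x)"

end

theory Submission
  imports Defs
begin



lemma pinv_eqI:
  fixes g :: "real \<Rightarrow> real"
  assumes pc: "p \<le> c" and cq: "c \<le> q" and lo: "\<forall>z\<in>{p..q}. z < c \<longrightarrow> g z < w"
    and hi: "\<forall>z\<in>{p..q}. c < z \<longrightarrow> w \<le> g z"
  shows "pinv g p q w = c"
proof -
  define S where "S = {x\<in>{p..q}. g x < w}"
  have sub: "x \<le> c" if "x \<in> S" for x
  proof (rule ccontr)
    assume "\<not> x \<le> c"
    then have "c < x" by simp
    moreover have "x \<in> {p..q}" "g x < w" using that unfolding S_def by auto
    ultimately show False using hi by force
  qed
  have inS: "z \<in> S" if "z \<in> {p..q}" "z < c" for z
    using lo that unfolding S_def by blast
  show ?thesis
  proof (cases "S = {}")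
    case True
    have "c = p"
    proof (rule ccontr)
      assume "c \<noteq> p" then have "p < c" using pc by simp
      then have "p \<in> S" using inS[of p] pc cq by simp
      then show False using True by blast
    qed
    moreover have "pinv g p q w = p" unfolding pinv_def using True unfolding S_def by (rule if_P)
    ultimately show ?thesis by simp
  next
    case False
    have "Sup S = c"
    proof (rule cSup_eq_non_empty)
      show "S \<noteq> {}" by fact
      show "\<And>x. x \<in> S \<Longrightarrow> x \<le> c" using sub by blast
      fix y assume ub: "\<And>x. x \<in> S \<Longrightarrow> x \<le> y"
      show "c \<le> y"
      proof (rule ccontr)
        assume "\<not> c \<le> y"
        then have yc: "y < c" by simp
        obtain x0 where x0: "x0 \<in> S" using False by blast
        have "p \<le> x0" using x0 unfolding S_def by simp
        moreover have "x0 \<le> y" using ub x0 .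
        ultimately have py: "p \<le> y" by simp
        define z where "z = (y + c) / 2"
        have zpq: "z \<in> {p..q}" using yc py cq unfolding z_def by simp
        have zc: "z < c" using yc unfolding z_def by simp
        have "z \<le> y" using ub inS[OF zpq zc] .
        then show False using yc unfolding z_def by simp
      qed
    qed
    moreover have "pinv g p q w = Sup S" unfolding pinv_def using False unfolding S_def by (rule if_not_P)
    ultimately show ?thesis by simp
  qed
qed


lemma pinv_props:
  fixes g :: "real \<Rightarrow> real"
  assumes mono: "\<And>x y. x \<in> {p..q} \<Longrightarrow> y \<in> {p..q} \<Longrightarrow> x \<le> y \<Longrightarrow> g x \<le> g y"
    and pq: "p \<le> q"
  shows "p \<le> pinv g p q w" "pinv g p q w \<le> q"
    "\<forall>z\<in>{p..q}. z < pinv g p q w \<longrightarrow> g z < w"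
    "\<forall>z\<in>{p..q}. pinv g p q w < z \<longrightarrow> w \<le> g z"
proof -
  let ?S = "{x\<in>{p..q}. g x < w}"
  have bdd: "bdd_above ?S" by (rule bdd_aboveI[of _ q]) auto
  have all: "p \<le> pinv g p q w \<and> pinv g p q w \<le> q \<and>
    (\<forall>z\<in>{p..q}. z < pinv g p q w \<longrightarrow> g z < w) \<and>
    (\<forall>z\<in>{p..q}. pinv g p q w < z \<longrightarrow> w \<le> g z)"
  proof (cases "?S = {}")
    case True
    have e: "pinv g p q w = p" unfolding pinv_def using True by (rule if_P)
    have "\<forall>x\<in>{p..q}. w \<le> g x" using True by (auto simp: not_less)
    then show ?thesis using pq e by auto
  next
    case False
    have e: "pinv g p q w = Sup ?S" unfolding pinv_def using False by (rule if_not_P)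
    obtain x0 where x0: "x0 \<in> ?S" using False by blast
    have "x0 \<le> Sup ?S" using x0 bdd by (rule cSup_upper)
    then have 1: "p \<le> Sup ?S" using x0 by auto
    have 2: "Sup ?S \<le> q" using False by (intro cSup_least) auto
    have 3: "\<forall>z\<in>{p..q}. z < Sup ?S \<longrightarrow> g z < w"
    proof (intro ballI impI)
      fix z assume z: "z \<in> {p..q}" "z < Sup ?S"
      then obtain z' where "z' \<in> ?S" "z < z'" using less_cSupD[OF False] by blast
      then show "g z < w" using mono[of z z'] z by fastforce
    qed
    have 4: "\<forall>z\<in>{p..q}. Sup ?S < z \<longrightarrow> w \<le> g z"
    proof (intro ballI impI)
      fix z assume z: "z \<in> {p..q}" "Sup ?S < z"
      show "w \<le> g z"
      proof (rule ccontr)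
        assume "\<not> w \<le> g z"
        then have "z \<in> ?S" using z by auto
        then have "z \<le> Sup ?S" using bdd by (rule cSup_upper)
        then show False using z by simp
      qed
    qed
    show ?thesis using 1 2 3 4 e by simp
  qed
  then show "p \<le> pinv g p q w" "pinv g p q w \<le> q"
    "\<forall>z\<in>{p..q}. z < pinv g p q w \<longrightarrow> g z < w"
    "\<forall>z\<in>{p..q}. pinv g p q w < z \<longrightarrow> w \<le> g z" by auto
qed



lemma tn_facts:
  assumes T: "is_tnorm T" and x: "x \<in> {0..1}"
  shows "T x 1 = x" "T 1 x = x" "T 0 x = 0" "T x x \<le> x" "0 \<le> T x x"
    "\<And>y. y \<in> {0..1} \<Longrightarrow> T x y \<in> {0..1}"
proof -
  have r: "\<And>u v. u \<in> {0..1} \<Longrightarrow> v \<in> {0..1} \<Longrightarrow> T u v \<in> {0..1}"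
    using T unfolding is_tnorm_def by blast
  have c: "\<And>u v. u \<in> {0..1} \<Longrightarrow> v \<in> {0..1} \<Longrightarrow> T u v = T v u"
    using T unfolding is_tnorm_def by blast
  have m: "\<And>u u' v. u \<in> {0..1} \<Longrightarrow> u' \<in> {0..1} \<Longrightarrow> v \<in> {0..1} \<Longrightarrow> u \<le> u' \<Longrightarrow>
      T u v \<le> T u' v \<and> T v u \<le> T v u'"
    using T unfolding is_tnorm_def by blast
  have n: "\<And>u. u \<in> {0..1} \<Longrightarrow> T u 1 = u" using T unfolding is_tnorm_def by blast
  show "T x 1 = x" using n x by blast
  show "T 1 x = x" using n x c[of 1 x] by simp
  have "T 0 x \<le> T 0 1" using m[of x 1 0] x by auto
  moreover have "T 0 1 = 0" using n[of 0] by simp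
  moreover have "0 \<le> T 0 x" using r[of 0 x] x by simp
  ultimately show "T 0 x = 0" by simp
  have "T x x \<le> T x 1" using m[of x 1 x] x by auto
  then show "T x x \<le> x" using n x by simp
  show "0 \<le> T x x" using r[of x x] x by simp
  show "\<And>y. y \<in> {0..1} \<Longrightarrow> T x y \<in> {0..1}" using r x by blast
qed

context
  fixes a b :: "'i \<Rightarrow> real" and Fs and \<alpha> :: 'i
  assumes ab: "a \<alpha> < b \<alpha>" and tn: "is_tnorm (Fs \<alpha>)"
begin

lemma scl: "y \<in> {a \<alpha>..b \<alpha>} \<Longrightarrow> (y - a \<alpha>) / (b \<alpha> - a \<alpha>) \<in> {0..1}"
  using ab by (auto simp: divide_simps)

lemma sum_a: "y \<in> {a \<alpha>..b \<alpha>} \<Longrightarrow> summand a b Fs \<alpha> (a \<alpha>) y = a \<alpha>"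
  using tn_facts(3)[OF tn scl] by (simp add: summand_def)

lemma sum_a2: "y \<in> {a \<alpha>..b \<alpha>} \<Longrightarrow> summand a b Fs \<alpha> y (a \<alpha>) = a \<alpha>"
proof -
  assume y: "y \<in> {a \<alpha>..b \<alpha>}"
  have "Fs \<alpha> ((y - a \<alpha>) / (b \<alpha> - a \<alpha>)) 0 = Fs \<alpha> 0 ((y - a \<alpha>) / (b \<alpha> - a \<alpha>))"
    using tn scl[OF y] unfolding is_tnorm_def by auto
  then show ?thesis using tn_facts(3)[OF tn scl[OF y]] by (simp add: summand_def)
qed

lemma sum_b: "y \<in> {a \<alpha>..b \<alpha>} \<Longrightarrow> summand a b Fs \<alpha> (b \<alpha>) y = y"
  using tn_facts(2)[OF tn scl] ab by (simp add: summand_def)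

lemma sum_b2: "y \<in> {a \<alpha>..b \<alpha>} \<Longrightarrow> summand a b Fs \<alpha> y (b \<alpha>) = y"
  using tn_facts(1)[OF tn scl] ab by (simp add: summand_def)

lemma sum_diag: "u \<in> {a \<alpha>..b \<alpha>} \<Longrightarrow> a \<alpha> \<le> summand a b Fs \<alpha> u u \<and> summand a b Fs \<alpha> u u \<le> u"
proof -
  assume u: "u \<in> {a \<alpha>..b \<alpha>}"
  let ?t = "(u - a \<alpha>) / (b \<alpha> - a \<alpha>)"
  have 1: "Fs \<alpha> ?t ?t \<le> ?t" "0 \<le> Fs \<alpha> ?t ?t" using tn_facts(4,5)[OF tn scl[OF u]] by auto
  have "(b \<alpha> - a \<alpha>) * Fs \<alpha> ?t ?t \<le> (b \<alpha> - a \<alpha>) * ?t"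
    using 1 ab by (intro mult_left_mono) auto
  also have "\<dots> = u - a \<alpha>" using ab by simp
  finally show ?thesis using 1 ab by (simp add: summand_def)
qed

lemma sum_rng: "u \<in> {a \<alpha>..b \<alpha>} \<Longrightarrow> v \<in> {a \<alpha>..b \<alpha>} \<Longrightarrow> summand a b Fs \<alpha> u v \<in> {a \<alpha>..b \<alpha>}"
proof -
  assume u: "u \<in> {a \<alpha>..b \<alpha>}" and v: "v \<in> {a \<alpha>..b \<alpha>}"
  let ?t = "Fs \<alpha> ((u - a \<alpha>) / (b \<alpha> - a \<alpha>)) ((v - a \<alpha>) / (b \<alpha> - a \<alpha>))"
  have 1: "?t \<in> {0..1}" using tn_facts(6)[OF tn scl[OF u] scl[OF v]] .
  have "(b \<alpha> - a \<alpha>) * ?t \<le> (b \<alpha> - a \<alpha>) * 1" using 1 ab by (intro mult_left_mono) auto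
  moreover have "0 \<le> (b \<alpha> - a \<alpha>) * ?t" using 1 ab by simp
  ultimately show ?thesis by (simp add: summand_def)
qed

end



context
  fixes A :: "'i::linorder set" and a b :: "'i \<Rightarrow> real"
    and Fs :: "'i \<Rightarrow> real \<Rightarrow> real \<Rightarrow> real" and f :: "real \<Rightarrow> real" and \<beta> :: 'i
  assumes od: "ordsum_data A a b Fs"
    and sm: "strict_mono_on {0..1} f" and rng: "f ` {0..1} \<subseteq> {0..1}"
    and bB: "\<beta> \<in> B_set A a b f"
begin

lemma odA: "\<alpha> \<in> A \<Longrightarrow> a \<alpha> < b \<alpha> \<and> is_tnorm (Fs \<alpha>)"
  using od unfolding ordsum_data_def by blast

lemma bA: "\<beta> \<in> A" using bB unfolding B_set_def by blast

lemma os_disj: "\<alpha> \<in> A \<Longrightarrow> \<gamma> \<in> A \<Longrightarrow> \<alpha> \<noteq> \<gamma> \<Longrightarrow> b \<alpha> \<le> a \<gamma> \<or> b \<gamma> \<le> a \<alpha>"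
proof (rule ccontr)
  assume h: "\<alpha> \<in> A" "\<gamma> \<in> A" "\<alpha> \<noteq> \<gamma>" "\<not> (b \<alpha> \<le> a \<gamma> \<or> b \<gamma> \<le> a \<alpha>)"
  define m where "m = (max (a \<alpha>) (a \<gamma>) + min (b \<alpha>) (b \<gamma>)) / 2"
  have "m \<in> {a \<alpha><..<b \<alpha>} \<inter> {a \<gamma><..<b \<gamma>}"
    using h odA[OF h(1)] odA[OF h(2)] unfolding m_def by (auto simp: max_def min_def)
  moreover have "{a \<alpha><..<b \<alpha>} \<inter> {a \<gamma><..<b \<gamma>} = {}" using od h unfolding ordsum_data_def by blast
  ultimately show False by blast
qed

lemma os_in:
  assumes "u \<in> {a \<beta>..b \<beta>}" "v \<in> {a \<beta>..b \<beta>}"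
  shows "ordsum A a b Fs u v = summand a b Fs \<beta> u v"
proof -
  have ex: "\<exists>\<alpha>. \<alpha> \<in> A \<and> u \<in> {a \<alpha>..b \<alpha>} \<and> v \<in> {a \<alpha>..b \<alpha>}" using assms bA by blast
  define \<alpha> where "\<alpha> = (SOME \<alpha>. \<alpha> \<in> A \<and> u \<in> {a \<alpha>..b \<alpha>} \<and> v \<in> {a \<alpha>..b \<alpha>})"
  have al: "\<alpha> \<in> A \<and> u \<in> {a \<alpha>..b \<alpha>} \<and> v \<in> {a \<alpha>..b \<alpha>}"
    unfolding \<alpha>_def by (rule someI_ex[OF ex])
  have e: "ordsum A a b Fs u v = summand a b Fs \<alpha> u v"
    using ex unfolding ordsum_def \<alpha>_def by (auto simp: Bex_def)
  show ?thesis
  proof (cases "\<alpha> = \<beta>")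
    case True then show ?thesis using e by simp
  next
    case False
    note ta = odA[OF conjunct1[OF al]] and tb = odA[OF bA]
    from os_disj[OF bA conjunct1[OF al] False[symmetric]] show ?thesis
    proof
      assume "b \<beta> \<le> a \<alpha>"
      then have "u = b \<beta>" "v = b \<beta>" "a \<alpha> = b \<beta>" using al assms by auto
      then show ?thesis using e sum_a[where a=a and b=b and Fs=Fs, OF conjunct1[OF ta] conjunct2[OF ta], of "a \<alpha>"]
        sum_b[where a=a and b=b and Fs=Fs, OF conjunct1[OF tb] conjunct2[OF tb], of "b \<beta>"] ta tb by auto
    next
      assume "b \<alpha> \<le> a \<beta>"
      then have "u = a \<beta>" "v = a \<beta>" "b \<alpha> = a \<beta>" using al assms by auto
      then show ?thesis using e sum_b[where a=a and b=b and Fs=Fs, OF conjunct1[OF ta] conjunct2[OF ta], of "b \<alpha>"]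
        sum_a[where a=a and b=b and Fs=Fs, OF conjunct1[OF tb] conjunct2[OF tb], of "a \<beta>"] ta tb by auto
    qed
  qed
qed

lemma os_min: "\<not> (\<exists>\<alpha>\<in>A. u \<in> {a \<alpha>..b \<alpha>} \<and> v \<in> {a \<alpha>..b \<alpha>}) \<Longrightarrow> ordsum A a b Fs u v = min u v"
  unfolding ordsum_def by (rule if_not_P)

lemma sep:
  assumes "\<alpha> \<in> A" "u \<in> {a \<alpha>..b \<alpha>}" "v \<in> {a \<alpha>..b \<alpha>}" "u < c" "c < v" "c = a \<beta> \<or> c = b \<beta>"
  shows False
proof (cases "\<alpha> = \<beta>")
  case True then show ?thesis using assms by auto
next
  case False
  have "a \<beta> < b \<beta>" using odA[OF bA] by simp
  from os_disj[OF bA assms(1) False[symmetric]] show ?thesis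
  proof
    assume "b \<beta> \<le> a \<alpha>" then show False using assms \<open>a \<beta> < b \<beta>\<close> by auto
  next
    assume "b \<alpha> \<le> a \<beta>" then show False using assms \<open>a \<beta> < b \<beta>\<close> by auto
  qed
qed

lemma os_diag_hi:
  assumes "b \<beta> < u"
  shows "b \<beta> \<le> ordsum A a b Fs u u \<and> ordsum A a b Fs u u \<le> u"
proof (cases "\<exists>\<alpha>\<in>A. u \<in> {a \<alpha>..b \<alpha>} \<and> u \<in> {a \<alpha>..b \<alpha>}")
  case False then show ?thesis using os_min assms by simp
next
  case True
  then have ex: "\<exists>\<alpha>. \<alpha> \<in> A \<and> u \<in> {a \<alpha>..b \<alpha>} \<and> u \<in> {a \<alpha>..b \<alpha>}" by blast
  define \<alpha> where "\<alpha> = (SOME \<alpha>. \<alpha> \<in> A \<and> u \<in> {a \<alpha>..b \<alpha>} \<and> u \<in> {a \<alpha>..b \<alpha>})"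
  have al: "\<alpha> \<in> A \<and> u \<in> {a \<alpha>..b \<alpha>} \<and> u \<in> {a \<alpha>..b \<alpha>}"
    unfolding \<alpha>_def by (rule someI_ex[OF ex])
  have e: "ordsum A a b Fs u u = summand a b Fs \<alpha> u u"
    using True unfolding ordsum_def \<alpha>_def by simp
  note ta = odA[OF conjunct1[OF al]]
  have d: "a \<alpha> \<le> summand a b Fs \<alpha> u u \<and> summand a b Fs \<alpha> u u \<le> u"
    using sum_diag[where a=a and b=b and Fs=Fs, OF conjunct1[OF ta] conjunct2[OF ta]] al by blast
  have ne: "\<alpha> \<noteq> \<beta>" using al assms by auto
  have "b \<beta> \<le> a \<alpha>" using os_disj[OF bA conjunct1[OF al] ne[symmetric]] al assms odA[OF bA] by auto
  then show ?thesis using d e by simp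
qed

abbreviation "s \<equiv> s_pt f a \<beta>"
abbreviation "t \<equiv> t_pt f b \<beta>"

lemma st_lt: "s < t" using bB unfolding B_set_def by blast

lemma t_le1: "t \<le> 1"
  unfolding t_pt_def by (auto intro!: cSup_least)

lemma s_ge0: "0 \<le> s"
  unfolding s_pt_def by (auto intro!: cInf_greatest)

lemma S_ne: "{x\<in>{0..1}. a \<beta> \<le> f x} \<noteq> {}"
  using st_lt t_le1 unfolding s_pt_def by (auto split: if_splits)

lemma T_ne: "{x\<in>{0..1}. f x \<le> b \<beta>} \<noteq> {}"
  using st_lt s_ge0 unfolding t_pt_def by (auto split: if_splits)

lemma s_eq: "s = Inf {x\<in>{0..1}. a \<beta> \<le> f x}" using S_ne unfolding s_pt_def by (rule if_not_P)
lemma t_eq: "t = Sup {x\<in>{0..1}. f x \<le> b \<beta>}" using T_ne unfolding t_pt_def by (rule if_not_P)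

lemma s_le1: "s \<le> 1" using st_lt t_le1 by simp
lemma t_ge0: "0 \<le> t" using st_lt s_ge0 by simp

lemma P1: "z \<in> {0..1} \<Longrightarrow> z < s \<Longrightarrow> f z < a \<beta>"
proof (rule ccontr)
  assume z: "z \<in> {0..1}" "z < s" "\<not> f z < a \<beta>"
  then have "z \<in> {x\<in>{0..1}. a \<beta> \<le> f x}" by auto
  moreover have "bdd_below {x\<in>{0..1}. a \<beta> \<le> f x}" by (rule bdd_belowI[of _ 0]) auto
  ultimately have "Inf {x\<in>{0..1}. a \<beta> \<le> f x} \<le> z" by (rule cInf_lower)
  then show False using z s_eq by simp
qed

lemma P2: "z \<in> {0..1} \<Longrightarrow> s < z \<Longrightarrow> a \<beta> < f z"
proof -
  assume z: "z \<in> {0..1}" "s < z"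
  then obtain z' where "z' \<in> {x\<in>{0..1}. a \<beta> \<le> f x}" "z' < z"
    using cInf_lessD[OF S_ne] s_eq by auto
  then show ?thesis using strict_mono_onD[OF sm, of z' z] z by force
qed

lemma P3: "z \<in> {0..1} \<Longrightarrow> t < z \<Longrightarrow> b \<beta> < f z"
proof (rule ccontr)
  assume z: "z \<in> {0..1}" "t < z" "\<not> b \<beta> < f z"
  then have "z \<in> {x\<in>{0..1}. f x \<le> b \<beta>}" by auto
  moreover have "bdd_above {x\<in>{0..1}. f x \<le> b \<beta>}" by (rule bdd_aboveI[of _ 1]) auto
  ultimately have "z \<le> Sup {x\<in>{0..1}. f x \<le> b \<beta>}" by (rule cSup_upper)
  then show False using z t_eq by simp
qed

lemma P4: "z \<in> {0..1} \<Longrightarrow> z < t \<Longrightarrow> f z < b \<beta>"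
proof -
  assume z: "z \<in> {0..1}" "z < t"
  then obtain z' where "z' \<in> {x\<in>{0..1}. f x \<le> b \<beta>}" "z < z'"
    using less_cSupD[OF T_ne] t_eq by auto
  then show ?thesis using strict_mono_onD[OF sm, of z z'] z by force
qed

lemma s01: "s \<in> {0..1}" using s_ge0 s_le1 by simp
lemma t01: "t \<in> {0..1}" using t_ge0 t_le1 by simp
lemma fs_lt_b: "f s < b \<beta>" using P4[OF s01 st_lt] .
lemma ft_gt_a: "a \<beta> < f t" using P2[OF t01 st_lt] .

lemma in01: "x \<in> {s..t} \<Longrightarrow> x \<in> {0..1}" using s_ge0 t_le1 by auto

lemma fdec_rng: "x \<in> {s..t} \<Longrightarrow> fdec f a b \<beta> x \<in> {a \<beta>..b \<beta>}"
proof -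
  assume x: "x \<in> {s..t}"
  consider "x = s" | "x = t" | "s < x \<and> x < t" using x by force
  then show ?thesis
  proof cases
    case 1 then show ?thesis using fs_lt_b odA[OF bA] by (auto simp: fdec_def)
  next
    case 2 then show ?thesis using ft_gt_a odA[OF bA] st_lt by (auto simp: fdec_def)
  next
    case 3 then show ?thesis using P2[OF in01[OF x]] P4[OF in01[OF x]]
      by (auto simp: fdec_def)
  qed
qed

lemma fdec_eq: "x \<in> {s..t} \<Longrightarrow> f x \<in> {a \<beta>..b \<beta>} \<Longrightarrow> fdec f a b \<beta> x = f x"
  by (auto simp: fdec_def)

lemma stepA:
  assumes w: "w \<in> {a \<beta>..b \<beta>}"
  shows "pinv f 0 1 w = pinv (fdec f a b \<beta>) s t w"
proof -
  define c where "c = pinv f 0 1 w"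
  have mono: "\<And>x y. x \<in> {0..1} \<Longrightarrow> y \<in> {0..1} \<Longrightarrow> x \<le> y \<Longrightarrow> f x \<le> f y"
    using strict_mono_onD[OF sm] by (metis order_le_less)
  note pp = pinv_props[of 0 1 f w, OF mono, simplified, folded c_def]
  have cs: "s \<le> c"
  proof (rule ccontr)
    assume "\<not> s \<le> c"
    define z where "z = (c + s) / 2"
    have "z \<in> {0..1}" "c < z" "z < s" using \<open>\<not> s \<le> c\<close> pp s01 unfolding z_def by auto
    then show False using pp(4) P1 w by fastforce
  qed
  have ct: "c \<le> t"
  proof (rule ccontr)
    assume "\<not> c \<le> t"
    define z where "z = (c + t) / 2"
    have "z \<in> {0..1}" "z < c" "t < z" using \<open>\<not> c \<le> t\<close> pp t01 unfolding z_def by auto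
    then show False using pp(3) P3 w by fastforce
  qed
  have "pinv (fdec f a b \<beta>) s t w = c"
  proof (rule pinv_eqI[OF cs ct])
    show "\<forall>z\<in>{s..t}. z < c \<longrightarrow> fdec f a b \<beta> z < w"
    proof (intro ballI impI)
      fix z assume z: "z \<in> {s..t}" "z < c"
      have fz: "f z < w" using pp(3) in01[OF z(1)] z by blast
      define m where "m = (z + c) / 2"
      have "m \<in> {0..1}" "s < m" "m < c" using z ct t_le1 s_ge0 unfolding m_def by auto
      then have "a \<beta> < w" using P2 pp(3) by fastforce
      have "z \<noteq> t" using z ct by auto
      then show "fdec f a b \<beta> z < w" using fz \<open>a \<beta> < w\<close> by (auto simp: fdec_def)
    qed
    show "\<forall>z\<in>{s..t}. c < z \<longrightarrow> w \<le> fdec f a b \<beta> z"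
    proof (intro ballI impI)
      fix z assume z: "z \<in> {s..t}" "c < z"
      have fz: "w \<le> f z" using pp(4) in01[OF z(1)] z by blast
      have "z \<noteq> s" using z cs by auto
      then show "w \<le> fdec f a b \<beta> z" using fz w by (auto simp: fdec_def)
    qed
  qed
  then show ?thesis unfolding c_def by simp
qed


lemma pinv_s_a: "pinv f 0 1 (a \<beta>) = s"
  using P1 P2 by (intro pinv_eqI[OF s_ge0 s_le1]) (auto intro: less_imp_le)

lemma pinv_s_fs: "pinv f 0 1 (f s) = s"
  using strict_mono_onD[OF sm _ s01] strict_mono_onD[OF sm s01]
  by (intro pinv_eqI[OF s_ge0 s_le1]) (auto intro: less_imp_le)

lemma pinv_t: "b \<beta> \<le> v \<Longrightarrow> v \<le> f t \<Longrightarrow> pinv f 0 1 v = t"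
proof (intro pinv_eqI[OF t_ge0 t_le1] ballI impI)
  fix z assume "b \<beta> \<le> v" "z \<in> {0..1::real}" "z < t"
  then show "f z < v" using P4 by fastforce
next
  fix z assume "v \<le> f t" "z \<in> {0..1::real}" "t < z"
  then show "v \<le> f z" using strict_mono_onD[OF sm t01, of z] by fastforce
qed

lemma main:
  assumes x: "x \<in> {s..t}" and y: "y \<in> {s..t}" and ne: "(x, y) \<noteq> (s, s)"
  shows "pinv f 0 1 (ordsum A a b Fs (f x) (f y)) =
    pinv (fdec f a b \<beta>) s t (summand a b Fs \<beta> (fdec f a b \<beta> x) (fdec f a b \<beta> y))"
proof -
  note tb = odA[OF bA]
  note sa = sum_a[where a=a and b=b and Fs=Fs, OF conjunct1[OF tb] conjunct2[OF tb]]
  note sa2 = sum_a2[where a=a and b=b and Fs=Fs, OF conjunct1[OF tb] conjunct2[OF tb]]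
  note sb = sum_b[where a=a and b=b and Fs=Fs, OF conjunct1[OF tb] conjunct2[OF tb]]
  note sb2 = sum_b2[where a=a and b=b and Fs=Fs, OF conjunct1[OF tb] conjunct2[OF tb]]
  define w where "w = summand a b Fs \<beta> (fdec f a b \<beta> x) (fdec f a b \<beta> y)"
  have wr: "w \<in> {a \<beta>..b \<beta>}" unfolding w_def
    using sum_rng[where a=a and b=b and Fs=Fs, OF conjunct1[OF tb] conjunct2[OF tb]]
      fdec_rng[OF x] fdec_rng[OF y] by blast
  have x01: "x \<in> {0..1}" and y01: "y \<in> {0..1}" using in01 x y by auto
  have key: "pinv f 0 1 (ordsum A a b Fs (f x) (f y)) = pinv f 0 1 w"
  proof (cases "f x \<in> {a \<beta>..b \<beta>} \<and> f y \<in> {a \<beta>..b \<beta>}")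
    case True
    then show ?thesis unfolding w_def using fdec_eq[OF x] fdec_eq[OF y] os_in by simp
  next
    case False
    show ?thesis
    proof (cases "x = s \<and> f s < a \<beta>")
      case True
      then have "y \<noteq> s" using ne by auto
      then have "s < y" using y by auto
      then have fy: "a \<beta> < f y" using P2[OF y01] by simp
      have "\<not> (\<exists>\<alpha>\<in>A. f x \<in> {a \<alpha>..b \<alpha>} \<and> f y \<in> {a \<alpha>..b \<alpha>})"
        using sep[of _ "f s" "f y" "a \<beta>"] True fy by blast
      then have "ordsum A a b Fs (f x) (f y) = f s" using os_min True fy by simp
      moreover have "w = a \<beta>" unfolding w_def using True sa fdec_rng[OF y] by (simp add: fdec_def)
      ultimately show ?thesis using pinv_s_a pinv_s_fs by simp
    next
      case nx: False
      show ?thesis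
      proof (cases "y = s \<and> f s < a \<beta>")
        case True
        then have "x \<noteq> s" using ne by auto
        then have "s < x" using x by auto
        then have fx: "a \<beta> < f x" using P2[OF x01] by simp
        have "\<not> (\<exists>\<alpha>\<in>A. f x \<in> {a \<alpha>..b \<alpha>} \<and> f y \<in> {a \<alpha>..b \<alpha>})"
          using sep[of _ "f s" "f x" "a \<beta>"] True fx by blast
        then have "ordsum A a b Fs (f x) (f y) = f s" using os_min True fx by simp
        moreover have "w = a \<beta>" unfolding w_def using True sa2 fdec_rng[OF x] by (simp add: fdec_def)
        ultimately show ?thesis using pinv_s_a pinv_s_fs by simp
      next
        case ny: False
        have ax: "a \<beta> \<le> f x"
        proof (cases "x = s")
          case True then show ?thesis using nx by simp
        next
          case False then show ?thesis using P2[OF x01] x by fastforce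
        qed
        have ay: "a \<beta> \<le> f y"
        proof (cases "y = s")
          case True then show ?thesis using ny by simp
        next
          case False then show ?thesis using P2[OF y01] y by fastforce
        qed
        have bx: "x \<noteq> t \<Longrightarrow> f x < b \<beta>" using P4[OF x01] x by fastforce
        have by': "y \<noteq> t \<Longrightarrow> f y < b \<beta>" using P4[OF y01] y by fastforce
        have ft: "fdec f a b \<beta> t = b \<beta>" if "b \<beta> < f t" using that st_lt by (simp add: fdec_def)
        have bb: "b \<beta> \<in> {a \<beta>..b \<beta>}" using tb by simp
        consider "x = t" "y = t" "b \<beta> < f t" | "x = t" "y \<noteq> t" "b \<beta> < f t"
          | "y = t" "x \<noteq> t" "b \<beta> < f t"
          using False ax ay bx by' by fastforce
        then show ?thesis
        proof cases
          case 1
          have "w = b \<beta>" unfolding w_def using 1 ft sb bb by simp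
          moreover have "b \<beta> \<le> ordsum A a b Fs (f x) (f y) \<and> ordsum A a b Fs (f x) (f y) \<le> f t"
            using os_diag_hi[of "f t"] 1 by simp
          ultimately show ?thesis using pinv_t[of "b \<beta>"] pinv_t[of "ordsum A a b Fs (f x) (f y)"] 1
            by simp
        next
          case 2
          have fy: "f y \<in> {a \<beta>..b \<beta>}" using ay by' 2 by simp
          have "\<not> (\<exists>\<alpha>\<in>A. f x \<in> {a \<alpha>..b \<alpha>} \<and> f y \<in> {a \<alpha>..b \<alpha>})"
            using sep[of _ "f y" "f t" "b \<beta>"] 2 by' by blast
          then have "ordsum A a b Fs (f x) (f y) = f y" using os_min 2 by' by simp
          moreover have "w = f y" unfolding w_def using 2 ft sb fdec_eq[OF y fy] fy by simp
          ultimately show ?thesis by simp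
        next
          case 3
          have fx: "f x \<in> {a \<beta>..b \<beta>}" using ax bx 3 by simp
          have "\<not> (\<exists>\<alpha>\<in>A. f x \<in> {a \<alpha>..b \<alpha>} \<and> f y \<in> {a \<alpha>..b \<alpha>})"
            using sep[of _ "f x" "f t" "b \<beta>"] 3 bx by blast
          then have "ordsum A a b Fs (f x) (f y) = f x" using os_min 3 bx by simp
          moreover have "w = f x" unfolding w_def using 3 ft sb2 fdec_eq[OF x fx] fx by simp
          ultimately show ?thesis by simp
        qed
      qed
    qed
  qed
  show ?thesis using key stepA[OF wr] unfolding w_def by simp
qed

end

theorem proposition4p1:
  fixes A :: "'i::linorder set" and a b :: "'i \<Rightarrow> real"
    and Fs :: "'i \<Rightarrow> real \<Rightarrow> real \<Rightarrow> real" and f :: "real \<Rightarrow> real"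
  assumes "ordsum_data A a b Fs"
    and "strict_mono_on {0..1} f" and "f ` {0..1} \<subseteq> {0..1}"
    and "B_set A a b f \<noteq> {}"
  shows "\<forall>\<beta>\<in>B_set A a b f. \<forall>x\<in>{s_pt f a \<beta>..t_pt f b \<beta>}. \<forall>y\<in>{s_pt f a \<beta>..t_pt f b \<beta>}.
           (x, y) \<noteq> (s_pt f a \<beta>, s_pt f a \<beta>) \<longrightarrow>
           pinv f 0 1 (ordsum A a b Fs (f x) (f y)) =
           pinv (fdec f a b \<beta>) (s_pt f a \<beta>) (t_pt f b \<beta>)
             (summand a b Fs \<beta> (fdec f a b \<beta> x) (fdec f a b \<beta> y))"
proof (intro ballI impI)
  fix \<beta> x y
  assume h: "\<beta> \<in> B_set A a b f" "x \<in> {s_pt f a \<beta>..t_pt f b \<beta>}"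
    "y \<in> {s_pt f a \<beta>..t_pt f b \<beta>}" "(x, y) \<noteq> (s_pt f a \<beta>, s_pt f a \<beta>)"
  show "pinv f 0 1 (ordsum A a b Fs (f x) (f y)) =
           pinv (fdec f a b \<beta>) (s_pt f a \<beta>) (t_pt f b \<beta>)
             (summand a b Fs \<beta> (fdec f a b \<beta> x) (fdec f a b \<beta> y))"
    by (rule main[OF assms(1,2,3) h])
qed

end
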